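(* For every $\varepsilon>0$ there exists $d_0$ such that for every integer $d\ge d_0$ and every triangle-free graph $G$ on $n$ vertices with maximum degree $d$, \[ |\mathcal I(G)| \;\ge\; \exp\!\left[\left(\tfrac12-\varepsilon\right)\frac{\log^2 d}{d}\,n\right]. \]
   Context: $\mathcal I(G)$ denotes the set of all independent sets of $G$ (including the empty set). Logarithms are natural. *)

theory Defs
  imports "HOL-Analysis.Analysis"
begin

definition simple_graph :: "'a set \<Rightarrow> ('a \<Rightarrow> 'a \<Rightarrow> bool) \<Rightarrow> bool" where
  "simple_graph V E \<longleftrightarrow> finite V \<and> (\<forall>u v. E u v \<longrightarrow> E v u)
     \<and> (\<forall>v. \<not> E v v) \<and> (\<forall>u v. E u v \<longrightarrow> u \<in> V \<and> v \<in> V)"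

definition neighbours :: "'a set \<Rightarrow> ('a \<Rightarrow> 'a \<Rightarrow> bool) \<Rightarrow> 'a \<Rightarrow> 'a set" where
  "neighbours V E v = {u \<in> V. E v u}"

definition degree :: "'a set \<Rightarrow> ('a \<Rightarrow> 'a \<Rightarrow> bool) \<Rightarrow> 'a \<Rightarrow> nat" where
  "degree V E v = card (neighbours V E v)"

text \<open>Maximum degree (defined for a nonempty vertex set).\<close>
definition max_degree :: "'a set \<Rightarrow> ('a \<Rightarrow> 'a \<Rightarrow> bool) \<Rightarrow> nat" where
  "max_degree V E = Max (degree V E ` V)"

definition triangle_free :: "'a set \<Rightarrow> ('a \<Rightarrow> 'a \<Rightarrow> bool) \<Rightarrow> bool" where
  "triangle_free V E \<longleftrightarrow> \<not> (\<exists>x\<in>V. \<exists>y\<in>V. \<exists>z\<in>V. E x y \<and> E y z \<and> E x z)"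

definition independent_set :: "'a set \<Rightarrow> ('a \<Rightarrow> 'a \<Rightarrow> bool) \<Rightarrow> 'a set \<Rightarrow> bool" where
  "independent_set V E S \<longleftrightarrow> S \<subseteq> V \<and> (\<forall>x\<in>S. \<forall>y\<in>S. \<not> E x y)"

definition independent_sets :: "'a set \<Rightarrow> ('a \<Rightarrow> 'a \<Rightarrow> bool) \<Rightarrow> 'a set set" where
  "independent_sets V E = {S. independent_set V E S}"

end

theory Submission
  imports Defs "HOL-Real_Asymp.Real_Asymp"
begin


lemma sum_Pow_pow:
  fixes l :: real
  assumes "finite U"
  shows "(\<Sum>T\<in>Pow U. l ^ card T) = (1+l) ^ card U"
  using assms
proof (induction U rule: finite_induct)
  case empty then show ?case by simp
next
  case (insert a A)
  have fin: "finite (Pow A)" using insert by simp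
  have disj: "Pow A \<inter> insert a ` Pow A = {}" using insert by auto
  have inj: "inj_on (insert a) (Pow A)" using insert.hyps(2) by (intro inj_onI) (metis PowD insert_ident subsetD)
  have "(\<Sum>T\<in>Pow (insert a A). l ^ card T) = (\<Sum>T\<in>Pow A. l ^ card T) + (\<Sum>T\<in>insert a ` Pow A. l ^ card T)"
    unfolding Pow_insert by (rule sum.union_disjoint) (use fin disj in auto)
  also have "(\<Sum>T\<in>insert a ` Pow A. l ^ card T) = (\<Sum>T\<in>Pow A. l ^ card (insert a T))"
    by (simp add: sum.reindex inj)
  also have "\<dots> = (\<Sum>T\<in>Pow A. l * l ^ card T)"
  proof (rule sum.cong)
    fix T assume "T \<in> Pow A"
    then have "finite T" "a \<notin> T" using insert finite_subset by auto
    then show "l ^ card (insert a T) = l * l ^ card T" by simp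
  qed simp
  finally show ?case using insert by (simp add: sum_distrib_left[symmetric] algebra_simps)
qed

lemma sum_Pow_card_pow:
  fixes l :: real
  assumes "finite U"
  shows "(1+l) * (\<Sum>T\<in>Pow U. card T * l ^ card T) = card U * l * (1+l) ^ card U"
  using assms
proof (induction U rule: finite_induct)
  case empty then show ?case by simp
next
  case (insert a A)
  have fin: "finite (Pow A)" using insert by simp
  have disj: "Pow A \<inter> insert a ` Pow A = {}" using insert by auto
  have inj: "inj_on (insert a) (Pow A)" using insert.hyps(2) by (intro inj_onI) (metis PowD insert_ident subsetD)
  have "(\<Sum>T\<in>Pow (insert a A). card T * l ^ card T) = (\<Sum>T\<in>Pow A. card T * l ^ card T) + (\<Sum>T\<in>insert a ` Pow A. card T * l ^ card T)"
    unfolding Pow_insert by (rule sum.union_disjoint) (use fin disj in auto)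
  also have "(\<Sum>T\<in>insert a ` Pow A. card T * l ^ card T) = (\<Sum>T\<in>Pow A. card (insert a T) * l ^ card (insert a T))"
    by (simp add: sum.reindex inj)
  also have "\<dots> = (\<Sum>T\<in>Pow A. l * (card T * l ^ card T) + l * l ^ card T)"
  proof (rule sum.cong)
    fix T assume "T \<in> Pow A"
    then have "finite T" "a \<notin> T" using insert finite_subset by auto
    then show "card (insert a T) * l ^ card (insert a T) = l * (card T * l ^ card T) + l * l ^ card T" 
      by (simp add: algebra_simps)
  qed simp
  also have "\<dots> = l * (\<Sum>T\<in>Pow A. card T * l ^ card T) + l * (1+l)^card A"
    by (simp add: sum.distrib sum_distrib_left[symmetric] sum_Pow_pow insert)
  finally have eq: "(\<Sum>T\<in>Pow (insert a A). card T * l ^ card T) = (1+l) * (\<Sum>T\<in>Pow A. card T * l ^ card T) + l * (1+l)^card A"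
    by (simp add: algebra_simps)
  show ?case unfolding eq using insert by (simp add: algebra_simps)
qed

lemma pointwise:
  fixes l th c M d :: real and y :: nat
  assumes l: "l > 0" and th: "0 \<le> th" "th \<le> 1" and c: "c \<ge> 0" and M: "M > 0" and d: "d > 0"
    and c1: "c \<le> th * M / (M + d)" and c2: "c * (1+l) * (d+M) \<le> (1-th) * ln (l*d/M)"
  shows "c * (l + (1+l)^y) * (1+l) \<le> th * l * (1+l) + (1-th) * y * l * (1+l)^y / d"
proof -
  define X where "X = (1+l)^y"
  define T where "T = l*d/M"
  have X0: "X > 0" unfolding X_def using l by simp
  have T0: "T > 0" unfolding T_def using l d M by simp
  have nn: "(1-th) * y * l * X / d \<ge> 0" using th l X0 d by simp
  have main: "c*(l+X)*(1+l) \<le> th*l*(1+l) + (1-th)*y*l*X/d"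
  proof (cases "X \<le> T")
    case True
    have "c * (l + X) * (1+l) \<le> c * (l + T) * (1+l)"
      using True c l by (intro mult_right_mono mult_left_mono) auto
    also have "l + T = l * (M+d)/M" unfolding T_def using M by (simp add: field_simps)
    also have "c * (l * (M + d) / M) * (1 + l) = (c * (M+d)/M) * (l * (1+l))" by simp
    also have "\<dots> \<le> th * (l * (1+l))"
    proof (rule mult_right_mono)
      show "c * (M + d) / M \<le> th" using c1 M d by (simp add: field_simps)
    qed (use l in simp)
    finally show ?thesis using nn by (simp add: mult.assoc)
  next
    case False
    have lnX: "ln X = y * ln (1+l)" unfolding X_def using l by (simp add: ln_realpow)
    have "ln (1+l) \<le> l" using l by (intro ln_add_one_self_le_self) simp
    then have "ln X \<le> y * l" unfolding lnX by (intro mult_left_mono) auto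
    moreover have "ln T < ln X" using False T0 by simp
    ultimately have lnT: "ln T \<le> y * l" by simp
    have "c * (l + X) * (1+l) = (c * (1+l) * (d+M)) * ((l+X)/(d+M))" using d M by (simp add: field_simps)
    also have "\<dots> \<le> ((1-th) * ln T) * ((l+X)/(d+M))"
      using c2 l X0 d M unfolding T_def by (intro mult_right_mono) auto
    also have "\<dots> \<le> ((1-th) * (y*l)) * ((l+X)/(d+M))"
      using lnT th l X0 d M by (intro mult_right_mono mult_left_mono) auto
    also have "(l+X)/(d+M) \<le> X/d"
    proof -
      have "l*d \<le> X*M" using False M d unfolding T_def by (simp add: field_simps)
      then show ?thesis using d M by (simp add: field_simps)
    qed
    then have "((1-th) * (y*l)) * ((l+X)/(d+M)) \<le> ((1-th) * (y*l)) * (X/d)"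
      using th l by (intro mult_left_mono) auto
    finally have "c * (l + X) * (1+l) \<le> (1-th) * y * l * X / d" by simp
    moreover have "th * l * (1+l) \<ge> 0" using th l by simp
    ultimately show ?thesis by linarith
  qed
  then show ?thesis by (simp add: X_def)
qed



lemma indep_finite: "simple_graph V E \<Longrightarrow> finite (independent_sets V E)"
  unfolding simple_graph_def independent_sets_def independent_set_def
  by (rule finite_subset[of _ "Pow V"]) auto

lemma fiber:
  assumes G: "simple_graph V E" and tf: "triangle_free V E" and v: "v \<in> V"
    and J: "J \<in> independent_sets V E" "J \<inter> insert v (neighbours V E v) = {}"
  shows "{T. T \<subseteq> insert v (neighbours V E v) \<and> J \<union> T \<in> independent_sets V E}
       = insert {v} (Pow {u\<in>neighbours V E v. \<forall>w\<in>J. \<not> E u w})"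
proof -
  have sym: "\<And>x y. E x y \<Longrightarrow> E y x" and irr: "\<And>x. \<not> E x x" and inV: "\<And>x y. E x y \<Longrightarrow> x \<in> V \<and> y \<in> V"
    using G unfolding simple_graph_def by auto
  have Jind: "J \<subseteq> V" "\<And>x y. x \<in> J \<Longrightarrow> y \<in> J \<Longrightarrow> \<not> E x y"
    using J(1) unfolding independent_sets_def independent_set_def by auto
  have tri: "\<And>x y z. E x y \<Longrightarrow> E y z \<Longrightarrow> E x z \<Longrightarrow> False"
    using tf inV unfolding triangle_free_def by blast
  have Nd: "\<And>u. u \<in> neighbours V E v \<longleftrightarrow> u \<in> V \<and> E v u" unfolding neighbours_def by auto
  show ?thesis
  proof (intro equalityI subsetI)
    fix T assume "T \<in> {T. T \<subseteq> insert v (neighbours V E v) \<and> J \<union> T \<in> independent_sets V E}"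
    then have T: "T \<subseteq> insert v (neighbours V E v)" and ind: "\<And>x y. x \<in> J \<union> T \<Longrightarrow> y \<in> J \<union> T \<Longrightarrow> \<not> E x y"
      unfolding independent_sets_def independent_set_def by auto
    show "T \<in> insert {v} (Pow {u\<in>neighbours V E v. \<forall>w\<in>J. \<not> E u w})"
    proof (cases "v \<in> T")
      case True
      have "T = {v}"
      proof (intro equalityI subsetI)
        fix x assume "x \<in> T"
        then have "x = v \<or> x \<in> neighbours V E v" using T by auto
        then show "x \<in> {v}" using ind[of v x] True \<open>x\<in>T\<close> Nd by auto
      qed (use True in auto)
      then show ?thesis by simp
    next
      case False
      then have "T \<subseteq> neighbours V E v" using T by auto
      then show ?thesis using ind by auto
    qed
  next
    fix T assume "T \<in> insert {v} (Pow {u\<in>neighbours V E v. \<forall>w\<in>J. \<not> E u w})"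
    then consider "T = {v}" | "T \<subseteq> {u\<in>neighbours V E v. \<forall>w\<in>J. \<not> E u w}" by auto
    then show "T \<in> {T. T \<subseteq> insert v (neighbours V E v) \<and> J \<union> T \<in> independent_sets V E}"
    proof cases
      case 1
      have "\<And>w. w \<in> J \<Longrightarrow> \<not> E v w"
        using J(2) Nd inV by blast
      then have "independent_set V E (J \<union> T)"
        unfolding independent_set_def 1 using Jind v irr sym by blast
      then show ?thesis unfolding independent_sets_def 1 by auto
    next
      case 2
      have "independent_set V E (J \<union> T)"
        unfolding independent_set_def
      proof (intro conjI ballI)
        show "J \<union> T \<subseteq> V" using 2 Jind Nd by auto
        fix x y assume x: "x \<in> J \<union> T" and y: "y \<in> J \<union> T"
        show "\<not> E x y"
        proof
          assume e: "E x y"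
          show False
          proof (cases "x \<in> J")
            case True
            then show False using y e Jind 2 sym by blast
          next
            case xT: False
            then have xT: "x \<in> T" using x by auto
            show False
            proof (cases "y \<in> J")
              case True then show False using xT e 2 by blast
            next
              case False
              then have "y \<in> T" using y by auto
              then have "E v x" "E v y" using xT 2 Nd by auto
              then show False using tri[of v x y] e by blast
            qed
          qed
        qed
      qed
      then show ?thesis unfolding independent_sets_def using 2 by auto
    qed
  qed
qed

lemma decomp:
  fixes f :: "'a set \<Rightarrow> real"
  assumes G: "simple_graph V E" and tf: "triangle_free V E" and v: "v \<in> V"
  defines "Nv \<equiv> insert v (neighbours V E v)"
  defines "I' \<equiv> {J\<in>independent_sets V E. J \<inter> Nv = {}}"
  defines "F \<equiv> \<lambda>J. insert {v} (Pow {u\<in>neighbours V E v. \<forall>w\<in>J. \<not> E u w})"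
  shows "(\<Sum>I\<in>independent_sets V E. f I) = (\<Sum>J\<in>I'. \<Sum>T\<in>F J. f (J \<union> T))"
proof -
  have finI: "finite (independent_sets V E)" using indep_finite[OF G] .
  have finV: "finite V" using G unfolding simple_graph_def by auto
  have finI': "finite I'" unfolding I'_def using finI by auto
  have finF: "\<And>J. finite (F J)" unfolding F_def neighbours_def using finV by auto
  have fib: "\<And>J. J \<in> I' \<Longrightarrow> F J = {T. T \<subseteq> Nv \<and> J \<union> T \<in> independent_sets V E}"
    unfolding F_def I'_def Nv_def using fiber[OF G tf v] by auto
  have "(\<Sum>J\<in>I'. \<Sum>T\<in>F J. f (J \<union> T)) = (\<Sum>p\<in>Sigma I' F. f (fst p \<union> snd p))"
    by (subst sum.Sigma) (use finI' finF in \<open>auto simp: case_prod_unfold\<close>)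
  also have "\<dots> = (\<Sum>I\<in>(\<lambda>p. fst p \<union> snd p) ` Sigma I' F. f I)"
  proof (rule sum.reindex[symmetric, unfolded comp_def])
    show "inj_on (\<lambda>p. fst p \<union> snd p) (Sigma I' F)"
    proof (rule inj_onI)
      fix p q assume p: "p \<in> Sigma I' F" and q: "q \<in> Sigma I' F" and eq: "fst p \<union> snd p = fst q \<union> snd q"
      have "fst p \<inter> Nv = {}" "snd p \<subseteq> Nv" "fst q \<inter> Nv = {}" "snd q \<subseteq> Nv"
        using p q fib unfolding I'_def by auto
      then have "fst p = (fst p \<union> snd p) - Nv" "snd p = (fst p \<union> snd p) \<inter> Nv"
         "fst q = (fst q \<union> snd q) - Nv" "snd q = (fst q \<union> snd q) \<inter> Nv" by auto
      then show "p = q" using eq by (metis prod.expand)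
    qed
  qed
  also have "(\<lambda>p. fst p \<union> snd p) ` Sigma I' F = independent_sets V E"
  proof (intro equalityI subsetI)
    fix I assume "I \<in> (\<lambda>p. fst p \<union> snd p) ` Sigma I' F"
    then obtain J T where "J \<in> I'" "T \<in> F J" "I = J \<union> T" by auto
    then show "I \<in> independent_sets V E" using fib by auto
  next
    fix I assume I: "I \<in> independent_sets V E"
    have J: "I - Nv \<in> I'" using I unfolding I'_def independent_sets_def independent_set_def by auto
    have "I \<inter> Nv \<in> F (I - Nv)" using fib[OF J] I by (auto simp: Un_Diff_Int)
    then have "(I - Nv, I \<inter> Nv) \<in> Sigma I' F" using J by auto
    moreover have "I = fst (I - Nv, I \<inter> Nv) \<union> snd (I - Nv, I \<inter> Nv)" by auto
    ultimately show "I \<in> (\<lambda>p. fst p \<union> snd p) ` Sigma I' F" by blast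
  qed
  finally show ?thesis by simp
qed



lemma per_vertex:
  fixes l th c d :: real
  assumes G: "simple_graph V E" and tf: "triangle_free V E" and v: "v \<in> V"
    and l: "l > 0" and d: "d > 0"
    and H: "\<And>y::nat. c*(l+(1+l)^y)*(1+l) \<le> th*l*(1+l) + (1-th)*y*l*(1+l)^y/d"
  shows "0 \<le> (\<Sum>I\<in>independent_sets V E. l ^ card I * (th * (if v \<in> I then 1 else 0)
              + (1-th)/d * card (I \<inter> neighbours V E v) - c))"
proof -
  define N where "N = neighbours V E v"
  define Nv where "Nv = insert v N"
  define I' where "I' = {J\<in>independent_sets V E. J \<inter> Nv = {}}"
  define U where "U = (\<lambda>J. {u\<in>N. \<forall>w\<in>J. \<not> E u w})"
  define g where "g = (\<lambda>I. l ^ card I * (th * (if v \<in> I then 1 else 0) + (1-th)/d * card (I \<inter> N) - c))"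
  have finV: "finite V" using G unfolding simple_graph_def by auto
  have irr: "\<And>x. \<not> E x x" using G unfolding simple_graph_def by auto
  have vN: "v \<notin> N" unfolding N_def neighbours_def using irr by auto
  have finN: "finite N" unfolding N_def neighbours_def using finV by auto
  have eq: "(\<Sum>I\<in>independent_sets V E. g I) = (\<Sum>J\<in>I'. \<Sum>T\<in>insert {v} (Pow (U J)). g (J \<union> T))"
    unfolding I'_def Nv_def U_def N_def by (rule decomp[OF G tf v])
  have inner: "0 \<le> (\<Sum>T\<in>insert {v} (Pow (U J)). g (J \<union> T))" if J: "J \<in> I'" for J
  proof -
    have finJ: "finite J" using J finV unfolding I'_def independent_sets_def independent_set_def
      by (auto intro: finite_subset)
    have JN: "J \<inter> N = {}" "v \<notin> J" using J unfolding I'_def Nv_def by auto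
    have UN: "U J \<subseteq> N" unfolding U_def by auto
    have finU: "finite (U J)" using finN UN finite_subset by auto
    have notin: "{v} \<notin> Pow (U J)" using UN vN by auto
    have g1: "g (J \<union> {v}) = l ^ card J * (l * (th - c))"
    proof -
      have "card (J \<union> {v}) = Suc (card J)" using finJ JN by simp
      moreover have "(J \<union> {v}) \<inter> N = {}" using JN vN by auto
      ultimately show ?thesis unfolding g_def by (simp add: algebra_simps)
    qed
    have g2: "g (J \<union> T) = l ^ card J * (l ^ card T * ((1-th)/d * card T - c))" if T: "T \<in> Pow (U J)" for T
    proof -
      have TN: "T \<subseteq> N" using T UN by auto
      have finT: "finite T" using TN finN finite_subset by auto
      have "card (J \<union> T) = card J + card T" using finJ finT JN TN by (intro card_Un_disjoint) auto
      moreover have "(J \<union> T) \<inter> N = T" using JN TN by auto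
      moreover have "v \<notin> J \<union> T" using JN TN vN by auto
      ultimately show ?thesis unfolding g_def by (simp add: algebra_simps power_add)
    qed
    define Y where "Y = card (U J)"
    have P0: "(\<Sum>T\<in>Pow (U J). l ^ card T) = (1+l)^Y" unfolding Y_def by (rule sum_Pow_pow[OF finU])
    have P1: "(1+l) * (\<Sum>T\<in>Pow (U J). card T * l ^ card T) = Y * l * (1+l)^Y"
      unfolding Y_def by (rule sum_Pow_card_pow[OF finU])
    have "(\<Sum>T\<in>Pow (U J). g (J \<union> T)) = l ^ card J * ((1-th)/d * (\<Sum>T\<in>Pow (U J). card T * l ^ card T) - c * (\<Sum>T\<in>Pow (U J). l ^ card T))"
      by (simp add: g2 sum_distrib_left sum_subtractf algebra_simps)
    then have s: "(\<Sum>T\<in>insert {v} (Pow (U J)). g (J \<union> T)) = l ^ card J * (l * (th - c) + ((1-th)/d * (\<Sum>T\<in>Pow (U J). card T * l ^ card T) - c * (1+l)^Y))"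
      using notin finU g1 P0 by (simp add: algebra_simps)
    have "0 \<le> l * (th - c) + ((1-th)/d * (\<Sum>T\<in>Pow (U J). card T * l ^ card T) - c * (1+l)^Y)"
    proof -
      have "(1+l) * (l * (th - c) + ((1-th)/d * (\<Sum>T\<in>Pow (U J). card T * l ^ card T) - c * (1+l)^Y))
          = th*l*(1+l) + (1-th)*Y*l*(1+l)^Y/d - c*(l+(1+l)^Y)*(1+l)"
        using P1 by (simp add: algebra_simps)
      also have "\<dots> \<ge> 0" using H[of Y] by simp
      finally show ?thesis using l by (simp add: zero_le_mult_iff)
    qed
    then show ?thesis unfolding s using l by simp
  qed
  have "0 \<le> (\<Sum>J\<in>I'. \<Sum>T\<in>insert {v} (Pow (U J)). g (J \<union> T))"
    by (rule sum_nonneg) (rule inner)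
  then show ?thesis using eq unfolding g_def N_def by simp
qed

definition Zf :: "'a set \<Rightarrow> ('a \<Rightarrow> 'a \<Rightarrow> bool) \<Rightarrow> real \<Rightarrow> real" where
  "Zf V E l = (\<Sum>I\<in>independent_sets V E. l ^ card I)"
definition Sf :: "'a set \<Rightarrow> ('a \<Rightarrow> 'a \<Rightarrow> bool) \<Rightarrow> real \<Rightarrow> real" where
  "Sf V E l = (\<Sum>I\<in>independent_sets V E. real (card I) * l ^ card I)"

lemma occupancy:
  fixes l th c :: real and d :: nat
  assumes G: "simple_graph V E" and tf: "triangle_free V E"
    and deg: "\<And>v. v \<in> V \<Longrightarrow> degree V E v \<le> d"
    and l: "l > 0" and d: "d > 0" and th: "0 \<le> th" "th \<le> 1"
    and H: "\<And>y::nat. c*(l+(1+l)^y)*(1+l) \<le> th*l*(1+l) + (1-th)*y*l*(1+l)^y/d"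
  shows "c * card V * Zf V E l \<le> Sf V E l"
proof -
  let ?I = "independent_sets V E"
  have finV: "finite V" using G unfolding simple_graph_def by auto
  have finI: "finite ?I" using indep_finite[OF G] .
  have sym: "\<And>x y. E x y \<Longrightarrow> E y x" and inV: "\<And>x y. E x y \<Longrightarrow> x \<in> V \<and> y \<in> V"
    using G unfolding simple_graph_def by auto
  have IV: "\<And>I. I \<in> ?I \<Longrightarrow> I \<subseteq> V" unfolding independent_sets_def independent_set_def by auto
  define A where "A = (\<lambda>v. \<Sum>I\<in>?I. l ^ card I * (if v \<in> I then 1 else 0))"
  define B where "B = (\<lambda>v. \<Sum>I\<in>?I. l ^ card I * real (card (I \<inter> neighbours V E v)))"
  have pv: "c * Zf V E l \<le> th * A v + (1-th)/d * B v" if "v \<in> V" for v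
    using per_vertex[OF G tf that l _ H] d
    unfolding A_def B_def Zf_def
    by (simp add: sum_distrib_left sum.distrib sum_subtractf algebra_simps)
  have "c * card V * Zf V E l = (\<Sum>v\<in>V. c * Zf V E l)" by simp
  also have "\<dots> \<le> (\<Sum>v\<in>V. th * A v + (1-th)/d * B v)" using pv by (intro sum_mono) auto
  also have "\<dots> = th * (\<Sum>v\<in>V. A v) + (1-th)/d * (\<Sum>v\<in>V. B v)"
    by (simp add: sum.distrib sum_distrib_left)
  also have "(\<Sum>v\<in>V. A v) = Sf V E l"
  proof -
    have "(\<Sum>v\<in>V. A v) = (\<Sum>I\<in>?I. \<Sum>v\<in>V. l ^ card I * (if v \<in> I then 1 else 0))"
      unfolding A_def by (rule sum.swap)
    also have "\<dots> = (\<Sum>I\<in>?I. card I * l ^ card I)"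
    proof (rule sum.cong)
      fix I assume "I \<in> ?I"
      then have "I \<subseteq> V" using IV by auto
      then have "V \<inter> I = I" by auto
      then show "(\<Sum>v\<in>V. l ^ card I * (if v \<in> I then 1 else 0)) = card I * l ^ card I"
        using finV by (simp add: sum_distrib_left[symmetric] sum.If_cases)
    qed simp
    finally show ?thesis unfolding Sf_def .
  qed
  also have "(\<Sum>v\<in>V. B v) \<le> d * Sf V E l"
  proof -
    have "(\<Sum>v\<in>V. B v) = (\<Sum>I\<in>?I. l ^ card I * (\<Sum>v\<in>V. real (card (I \<inter> neighbours V E v))))"
      unfolding B_def by (subst sum.swap) (simp add: sum_distrib_left)
    also have "\<dots> \<le> (\<Sum>I\<in>?I. l ^ card I * (d * card I))"
    proof (rule sum_mono)
      fix I assume I: "I \<in> ?I"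
      then have IV': "I \<subseteq> V" using IV by auto
      have finI': "finite I" using IV' finV finite_subset by auto
      have "(\<Sum>v\<in>V. real (card (I \<inter> neighbours V E v))) = (\<Sum>v\<in>V. \<Sum>u\<in>I. if E v u then 1 else 0)"
      proof (rule sum.cong)
        fix v assume "v \<in> V"
        have "I \<inter> neighbours V E v = {u\<in>I. E v u}" using IV' unfolding neighbours_def by auto
        moreover have "(\<Sum>u\<in>I. if E v u then 1 else 0 :: real) = (\<Sum>u\<in>{u\<in>I. E v u}. 1)"
          using finI' by (simp add: sum.inter_filter[symmetric])
        ultimately show "real (card (I \<inter> neighbours V E v)) = (\<Sum>u\<in>I. if E v u then 1 else 0)"
          by simp
      qed simp
      also have "\<dots> = (\<Sum>u\<in>I. \<Sum>v\<in>V. if E v u then 1 else 0)" by (rule sum.swap)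
      also have "\<dots> = (\<Sum>u\<in>I. real (degree V E u))"
      proof (rule sum.cong)
        fix u assume "u \<in> I"
        have "neighbours V E u = {v\<in>V. E v u}" unfolding neighbours_def using sym by auto
        then show "(\<Sum>v\<in>V. if E v u then 1 else 0) = real (degree V E u)"
          unfolding degree_def using finV by (simp add: sum.If_cases Int_def)
      qed simp
      also have "\<dots> \<le> (\<Sum>u\<in>I. real d)" using deg IV' by (intro sum_mono) auto
      finally have "(\<Sum>v\<in>V. real (card (I \<inter> neighbours V E v))) \<le> d * card I" by (simp add: mult.commute)
      then show "l ^ card I * (\<Sum>v\<in>V. real (card (I \<inter> neighbours V E v))) \<le> l ^ card I * (d * card I)"
        using l by (intro mult_left_mono) auto
    qed
    also have "\<dots> = d * Sf V E l" unfolding Sf_def by (simp add: sum_distrib_left algebra_simps)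
    finally show ?thesis .
  qed
  then have "th * Sf V E l + (1-th)/d * (\<Sum>v\<in>V. B v) \<le> th * Sf V E l + (1-th)/d * (d * Sf V E l)"
    using th d by (intro add_left_mono mult_left_mono) auto
  also have "\<dots> = Sf V E l" using d by (simp add: field_simps)
  finally show ?thesis .
qed



lemma Zf_pos:
  assumes G: "simple_graph V E" and l: "l \<ge> 0"
  shows "Zf V E l \<ge> 1"
proof -
  have "{} \<in> independent_sets V E" unfolding independent_sets_def independent_set_def by auto
  then have "l ^ card ({}::'a set) \<le> Zf V E l" unfolding Zf_def
    using indep_finite[OF G] l by (intro member_le_sum) auto
  then show ?thesis by simp
qed

lemma step:
  assumes G: "simple_graph V E" and l: "l > 0" and occ: "c * n * Zf V E l \<le> Sf V E l"
  shows "Zf V E l * exp (c * n) \<le> Zf V E (exp 1 * l)"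
proof -
  let ?I = "independent_sets V E"
  have Z1: "Zf V E l \<ge> 1" using Zf_pos[OF G] l by simp
  define m where "m = Sf V E l / Zf V E l"
  have cm: "c * n \<le> m" unfolding m_def using occ Z1 by (simp add: field_simps)
  have "exp m * Zf V E l = exp m * (\<Sum>I\<in>?I. l ^ card I * (1 + (card I - m)))"
  proof -
    have "(\<Sum>I\<in>?I. l ^ card I * (1 + (card I - m))) = Zf V E l + Sf V E l - m * Zf V E l"
      unfolding Zf_def Sf_def by (simp add: algebra_simps sum.distrib sum_subtractf sum_distrib_left)
    also have "\<dots> = Zf V E l" unfolding m_def using Z1 by simp
    finally show ?thesis by simp
  qed
  also have "\<dots> = (\<Sum>I\<in>?I. l ^ card I * (exp m * (1 + (card I - m))))"
    by (simp add: sum_distrib_left algebra_simps)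
  also have "\<dots> \<le> (\<Sum>I\<in>?I. l ^ card I * exp (card I))"
  proof (rule sum_mono)
    fix I
    have "1 + (card I - m) \<le> exp (card I - m)" by (rule exp_ge_add_one_self)
    then have "exp m * (1 + (card I - m)) \<le> exp m * exp (card I - m)" by simp
    also have "\<dots> = exp (card I)" by (simp add: exp_add[symmetric])
    finally show "l ^ card I * (exp m * (1 + (card I - m))) \<le> l ^ card I * exp (card I)"
      using l by (intro mult_left_mono) auto
  qed
  also have "\<dots> = Zf V E (exp 1 * l)" unfolding Zf_def
  proof (rule sum.cong)
    fix I
    have "exp (real (card I)) = exp 1 ^ card I" by (simp add: exp_of_nat_mult[symmetric])
    then show "l ^ card I * exp (card I) = (exp 1 * l) ^ card I" by (simp add: power_mult_distrib)
  qed simp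
  finally have "exp m * Zf V E l \<le> Zf V E (exp 1 * l)" .
  moreover have "Zf V E l * exp (c * n) \<le> exp m * Zf V E l" using cm Z1 by simp
  ultimately show ?thesis by linarith
qed

lemma sum_lessThan_real: "(\<Sum>j<K. real j) = real K * (real K - 1) / 2"
  by (induction K) (auto simp: field_simps)

lemma Zf_mono1:
  assumes G: "simple_graph V E" and l: "0 \<le> l" "l \<le> 1"
  shows "Zf V E l \<le> real (card (independent_sets V E))"
proof -
  have "Zf V E l \<le> (\<Sum>I\<in>independent_sets V E. 1)" unfolding Zf_def
    using l by (intro sum_mono) (auto intro: power_le_one)
  then show ?thesis by simp
qed

lemma graph_bound:
  fixes th M La :: real and d K :: nat
  assumes G: "simple_graph V E" and tf: "triangle_free V E"
    and deg: "\<And>v. v \<in> V \<Longrightarrow> degree V E v \<le> d"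
    and d: "d > 0" and th: "0 \<le> th" "th \<le> 1" and M: "M > 0" and La: "0 \<le> La" "La \<le> 1"
    and KL: "M * exp K / d \<le> La" and KM: "real K \<le> th * M"
  shows "exp (card V * ((1-th) * K * (real K - 1) / (2*(1+La)*(d+M)))) \<le> card (independent_sets V E)"
proof -
  define lam where "lam = (\<lambda>k::nat. M * exp k / d)"
  define cc where "cc = (\<lambda>j::nat. (1-th) * j / ((1+La)*(d+M)))"
  have lam_pos: "\<And>k. lam k > 0" unfolding lam_def using M d by simp
  have lam_mono: "\<And>j. j \<le> K \<Longrightarrow> lam j \<le> La"
  proof -
    fix j assume "j \<le> K"
    then have "lam j \<le> lam K" unfolding lam_def using M d by (intro divide_right_mono mult_left_mono) auto
    then show "lam j \<le> La" using KL unfolding lam_def by simp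
  qed
  have chain: "k \<le> K \<Longrightarrow> exp (card V * (\<Sum>j<k. cc j)) \<le> Zf V E (lam k)" for k
  proof (induction k)
    case 0 then show ?case using Zf_pos[OF G, of "lam 0"] lam_pos[of 0] by simp
  next
    case (Suc k)
    then have k: "k < K" by simp
    have Hp: "\<And>y::nat. cc k*(lam k+(1+lam k)^y)*(1+lam k) \<le> th*lam k*(1+lam k) + (1-th)*y*lam k*(1+lam k)^y/d"
    proof (rule pointwise)
      show "lam k > 0" by (rule lam_pos)
      show "0 \<le> th" "th \<le> 1" "0 < M" "0 < real d" using th M d by auto
      show "cc k \<ge> 0" unfolding cc_def using th La M by simp
      have "(1-th) * k \<le> th * M"
      proof -
        have "(1-th) * k \<le> k" using th by (simp add: mult_left_le_one_le)
        also have "\<dots> \<le> th * M" using KM k by simp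
        finally show ?thesis .
      qed
      moreover have "th * M \<le> th * M * (1+La)"
      proof -
        have "0 \<le> th*M*La" using th M La by simp
        then show ?thesis by (simp add: distrib_left)
      qed
      ultimately have "(1-th) * k \<le> th * M * (1+La)" by linarith
      then have a: "(1-th) * k / (1+La) \<le> th * M" using La by (simp add: pos_divide_le_eq)
      have "cc k = ((1-th) * k / (1+La)) / (M + d)" unfolding cc_def by (simp add: add.commute)
      also have "\<dots> \<le> th * M / (M + d)" using a M d by (intro divide_right_mono) auto
      finally show "cc k \<le> th * M / (M + real d)" .
      have "ln (lam k * d / M) = k" unfolding lam_def using M d by simp
      moreover have "cc k * (1 + lam k) * (d + M) \<le> cc k * (1 + La) * (d + M)"
        using lam_mono[of k] k \<open>cc k \<ge> 0\<close> M by (intro mult_right_mono mult_left_mono) auto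
      moreover have "cc k * (1 + La) * (d + M) = (1-th) * k" unfolding cc_def using La M d by simp
      ultimately show "cc k * (1 + lam k) * (real d + M) \<le> (1 - th) * ln (lam k * real d / M)" by simp
    qed
    have occ: "cc k * card V * Zf V E (lam k) \<le> Sf V E (lam k)"
      by (rule occupancy[OF G tf deg lam_pos d th Hp])
    have st: "Zf V E (lam k) * exp (cc k * card V) \<le> Zf V E (exp 1 * lam k)"
      by (rule step[OF G lam_pos occ])
    have "exp 1 * lam k = lam (Suc k)" unfolding lam_def by (simp add: exp_add[symmetric] add.commute)
    then have st': "Zf V E (lam k) * exp (cc k * card V) \<le> Zf V E (lam (Suc k))" using st by simp
    have "exp (card V * (\<Sum>j<Suc k. cc j)) = exp (card V * (\<Sum>j<k. cc j)) * exp (cc k * card V)"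
      by (simp add: exp_add[symmetric] algebra_simps)
    moreover have "exp (card V * (\<Sum>j<k. cc j)) * exp (cc k * card V) \<le> Zf V E (lam k) * exp (cc k * card V)"
      using Suc k by simp
    ultimately show ?case using st' by linarith
  qed
  have "(\<Sum>j<K. cc j) = (\<Sum>j<K. (1-th)/((1+La)*(d+M)) * real j)" unfolding cc_def by (intro sum.cong) auto
  also have "\<dots> = (1-th)/((1+La)*(d+M)) * (\<Sum>j<K. real j)" by (simp add: sum_distrib_left)
  also have "\<dots> = (1-th)/((1+La)*(d+M)) * (real K * (real K - 1) / 2)" by (simp add: sum_lessThan_real)
  also have "\<dots> = (1-th) * K * (real K - 1) / (2*(1+La)*(d+M))" by (simp add: mult.assoc mult.left_commute algebra_simps)
  finally have "(\<Sum>j<K. cc j) = (1-th) * K * (real K - 1) / (2*(1+La)*(d+M))" .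
  then have "exp (card V * ((1-th) * K * (real K - 1) / (2*(1+La)*(d+M)))) \<le> Zf V E (lam K)"
    using chain[of K] by simp
  also have "\<dots> \<le> card (independent_sets V E)"
    using Zf_mono1[OF G] lam_pos[of K] lam_mono[of K] La by fastforce
  finally show ?thesis .
qed



lemma alg_eq:
  fixes u A k P s x :: real
  assumes "s \<noteq> 0" "x \<noteq> 0" "P \<noteq> 0" "k \<noteq> 0"
  shows "u*A/(k*P) = (u/k) * (A*x/(s*P)) * (s/x)"
  using assms by (simp add: field_simps)

lemma asymp:
  fixes e :: real
  assumes e: "0 < e" "e < 1/2"
  shows "\<exists>D. \<forall>x\<ge>D. x \<ge> 3 \<and> ln x + 2*ln e - ln (ln x) \<ge> 2 \<and>
     (1/2-e)*(ln x)^2/x \<le> (1-e)*((ln x + 2*ln e - ln (ln x))-1)*((ln x + 2*ln e - ln (ln x))-2)/(2*(1+e)*(x+ln x/e))"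
proof -
  define L where "L = (\<lambda>x::real. ln x + 2*ln e - ln (ln x))"
  define q where "q = (1-2*e)*(1+e)/(1-e)"
  have q1: "q < 1" unfolding q_def using e by (simp add: field_simps)
  have lim: "((\<lambda>x. (L x - 1)*(L x - 2)*x / ((ln x)^2*(x + ln x/e))) \<longlongrightarrow> 1) at_top"
    unfolding L_def using e by real_asymp
  have ev1: "eventually (\<lambda>x. (L x - 1)*(L x - 2)*x / ((ln x)^2*(x + ln x/e)) > q) at_top"
    using order_tendstoD(1)[OF lim q1] .
  have ev2: "eventually (\<lambda>x. L x \<ge> 2) at_top"
  proof -
    have "filterlim L at_top at_top" unfolding L_def using e by real_asymp
    then show ?thesis by (simp add: filterlim_at_top)
  qed
  have ev3: "eventually (\<lambda>x::real. x \<ge> 3) at_top" by (rule eventually_ge_at_top)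
  have "eventually (\<lambda>x. x \<ge> 3 \<and> L x \<ge> 2 \<and>
     (1/2-e)*(ln x)^2/x \<le> (1-e)*(L x-1)*(L x-2)/(2*(1+e)*(x+ln x/e))) at_top"
    using ev1 ev2 ev3
  proof eventually_elim
    case (elim x)
    then have x: "x \<ge> 3" and R: "(L x - 1)*(L x - 2)*x / ((ln x)^2*(x + ln x/e)) > q" by auto
    have lnx: "ln x > 0" using x by simp
    define R where "R = (L x - 1)*(L x - 2)*x / ((ln x)^2*(x + ln x/e))"
    have pos: "x + ln x/e > 0" using lnx x e by (simp add: add_pos_pos)
    have eq: "(1-e)*(L x-1)*(L x-2)/(2*(1+e)*(x+ln x/e)) = ((1-e)/(2*(1+e))) * R * ((ln x)^2/x)"
      unfolding R_def using alg_eq[of "(ln x)^2" x "x + ln x/e" "2*(1+e)" "1-e" "(L x - 1)*(L x - 2)"] lnx x pos e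
      by (simp add: mult.assoc)
    have qq: "(1-e)/(2*(1+e)) * q = 1/2 - e" unfolding q_def
    proof -
      have h: "1 - e \<noteq> 0" "1 + e \<noteq> 0" using e by auto
      have "(1-e)/(2*(1+e)) * ((1-2*e)*(1+e)/(1-e)) = ((1-e)*(1+e)) * (1-2*e) / (((1-e)*(1+e)) * 2)"
        by (simp add: algebra_simps)
      also have "\<dots> = (1-2*e)/2" using h by (subst mult_divide_mult_cancel_left) auto
      finally show "(1-e)/(2*(1+e)) * ((1-2*e)*(1+e)/(1-e)) = 1/2 - e" by simp
    qed
    have "(1/2-e)*(ln x)^2/x = ((1-e)/(2*(1+e))) * q * ((ln x)^2/x)"
      unfolding qq by simp
    also have "\<dots> \<le> ((1-e)/(2*(1+e))) * R * ((ln x)^2/x)"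
      using R e lnx x unfolding R_def by (intro mult_right_mono mult_left_mono) auto
    finally show ?case using eq elim by simp
  qed
  then show ?thesis unfolding L_def eventually_at_top_linorder by blast
qed



lemma card_indep_ge1:
  assumes G: "simple_graph V E"
  shows "1 \<le> real (card (independent_sets V E))"
proof -
  have "{} \<in> independent_sets V E" unfolding independent_sets_def independent_set_def by auto
  then have "card (independent_sets V E) \<noteq> 0" using indep_finite[OF G] by auto
  then show ?thesis by simp
qed

theorem theorem1p2:
  "\<forall>\<epsilon>::real. \<epsilon> > 0 \<longrightarrow> (\<exists>d0::nat. \<forall>d::nat. d \<ge> d0 \<longrightarrow>
     (\<forall>(V::nat set) E. simple_graph V E \<and> V \<noteq> {} \<and> triangle_free V E \<and> max_degree V E = d \<longrightarrow>
        real (card (independent_sets V E))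
          \<ge> exp ((1/2 - \<epsilon>) * (ln (real d))\<^sup>2 / real d * real (card V))))"
proof (intro allI impI)
  fix e :: real assume e0: "e > 0"
  show "\<exists>d0::nat. \<forall>d::nat. d \<ge> d0 \<longrightarrow>
     (\<forall>(V::nat set) E. simple_graph V E \<and> V \<noteq> {} \<and> triangle_free V E \<and> max_degree V E = d \<longrightarrow>
        real (card (independent_sets V E))
          \<ge> exp ((1/2 - e) * (ln (real d))\<^sup>2 / real d * real (card V)))"
  proof (cases "e \<ge> 1/2")
    case True
    show ?thesis
    proof (intro exI allI impI)
      fix d :: nat and V :: "nat set" and E
      assume H: "simple_graph V E \<and> V \<noteq> {} \<and> triangle_free V E \<and> max_degree V E = d"
      have "(1/2 - e) * (ln (real d))\<^sup>2 / real d * real (card V) \<le> 0"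
        using True by (intro mult_nonpos_nonneg divide_nonpos_nonneg mult_nonpos_nonneg) auto
      then have "exp ((1/2 - e) * (ln (real d))\<^sup>2 / real d * real (card V)) \<le> 1" by simp
      also have "\<dots> \<le> real (card (independent_sets V E))" using card_indep_ge1 H by blast
      finally show "real (card (independent_sets V E)) \<ge> exp ((1/2 - e) * (ln (real d))\<^sup>2 / real d * real (card V))" .
    qed
  next
    case False
    then have e: "0 < e" "e < 1/2" using e0 by auto
    obtain D where D: "\<And>x. x \<ge> D \<Longrightarrow> x \<ge> 3 \<and> ln x + 2*ln e - ln (ln x) \<ge> 2 \<and>
     (1/2-e)*(ln x)^2/x \<le> (1-e)*((ln x + 2*ln e - ln (ln x))-1)*((ln x + 2*ln e - ln (ln x))-2)/(2*(1+e)*(x+ln x/e))"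
      using asymp[OF e] by blast
    show ?thesis
    proof (intro exI[of _ "nat \<lceil>D\<rceil>"] allI impI)
      fix d :: nat and V :: "nat set" and E
      assume dD: "nat \<lceil>D\<rceil> \<le> d"
      assume H: "simple_graph V E \<and> V \<noteq> {} \<and> triangle_free V E \<and> max_degree V E = d"
      then have G: "simple_graph V E" and tf: "triangle_free V E" and Vne: "V \<noteq> {}" and md: "max_degree V E = d" by auto
      have finV: "finite V" using G unfolding simple_graph_def by auto
      have deg: "\<And>v. v \<in> V \<Longrightarrow> degree V E v \<le> d"
        unfolding md[symmetric] max_degree_def using finV by (intro Max_ge) auto
      have xD: "real d \<ge> D" using dD by linarith
      define x where "x = real d"
      define L where "L = ln x + 2*ln e - ln (ln x)"
      have x3: "x \<ge> 3" and L2: "L \<ge> 2"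
        and ineq: "(1/2-e)*(ln x)^2/x \<le> (1-e)*(L-1)*(L-2)/(2*(1+e)*(x+ln x/e))"
        using D[OF xD] unfolding x_def L_def by auto
      have d0: "d > 0" using x3 unfolding x_def by simp
      have lnx1: "ln x \<ge> 1"
      proof -
        have "exp 1 \<le> x" using x3 exp_le by linarith
        then show ?thesis using x3 by (simp add: ln_ge_iff)
      qed
      define M where "M = ln x / e"
      have M0: "M > 0" unfolding M_def using lnx1 e by simp
      define K where "K = nat \<lfloor>L\<rfloor>"
      have K: "real K = of_int \<lfloor>L\<rfloor>" unfolding K_def using L2 by simp
      have KL: "real K \<le> L" "L - 1 \<le> real K" unfolding K by linarith+
      have lnlnx: "ln (ln x) \<ge> 0" using lnx1 by simp
      have lne: "ln e < 0" using e by simp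
      have Lln: "L \<le> ln x" unfolding L_def using lnlnx lne by linarith
      have expL: "exp L = x * e^2 / ln x"
      proof -
        have "L = ln (x * e^2 / ln x)" unfolding L_def using x3 lnx1 e
          by (simp add: ln_div ln_mult ln_realpow)
        then show ?thesis using x3 lnx1 e by simp
      qed
      have c1: "M * exp (real K) / real d \<le> e"
      proof -
        have "exp (real K) \<le> exp L" using KL by simp
        then have "M * exp (real K) / x \<le> M * exp L / x" using M0 x3 by (intro divide_right_mono mult_left_mono) auto
        also have "\<dots> = e" unfolding expL M_def using x3 lnx1 e by (simp add: field_simps power2_eq_square)
        finally show ?thesis unfolding x_def .
      qed
      have c2: "real K \<le> e * M" unfolding M_def using KL Lln e by simp
      have gb: "exp (card V * ((1-e) * K * (real K - 1) / (2*(1+e)*(d+M)))) \<le> card (independent_sets V E)"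
        by (rule graph_bound[OF G tf deg d0 _ _ M0 _ _ c1 c2]) (use e in auto)
      have "(L-1)*(L-2) \<le> real K * (real K - 1)"
        using KL L2 by (intro mult_mono) auto
      then have "(1-e)*(L-1)*(L-2)/(2*(1+e)*(x+ln x/e)) \<le> (1-e) * K * (real K - 1) / (2*(1+e)*(d+M))"
        unfolding M_def x_def[symmetric] using e x3 lnx1
        by (simp add: mult.assoc divide_right_mono mult_left_mono add_pos_pos)
      with ineq have "(1/2-e)*(ln x)^2/x \<le> (1-e) * K * (real K - 1) / (2*(1+e)*(d+M))" by linarith
      then have "(1/2-e)*(ln x)^2/x * card V \<le> ((1-e) * K * (real K - 1) / (2*(1+e)*(d+M))) * card V"
        by (rule mult_right_mono) simp
      also have "\<dots> = card V * ((1-e) * K * (real K - 1) / (2*(1+e)*(d+M)))" by (rule mult.commute)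
      finally have "exp ((1/2-e)*(ln x)^2/x * card V) \<le> exp (card V * ((1-e) * K * (real K - 1) / (2*(1+e)*(d+M))))"
        by simp
      with gb show "real (card (independent_sets V E)) \<ge> exp ((1/2 - e) * (ln (real d))\<^sup>2 / real d * real (card V))"
        unfolding x_def by linarith
    qed
  qed
qed

end
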